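(* Let $\varphi(\bm x,\bm y,\bm w,\bm z)$ be an existential LRA formula, where $\bm x,\bm y$ have the same length, and let $\bm v_1,\bm v_2,\bm w_1,\bm w_2$ be fresh tuples of variables of the same length as $\bm w$. Then over $\mathbb{R}$ the formulas $\exists^{\mathsf{ram}}\bm x,\bm y\colon \exists\bm w\colon \varphi(\bm x,\bm y,\bm w,\bm z)$ and $\exists^{\mathsf{ram}}(\bm x,\bm v_1,\bm v_2),(\bm y,\bm w_1,\bm w_2)\colon \varphi(\bm x,\bm y,\bm v_1+\bm w_2,\bm z)\wedge \bm x\neq\bm y$ are equivalent.
   Context: LRA is the first-order theory of $\langle\mathbb{R};+,<,0,1\rangle$ (rational constants allowed). Ramsey quantifier: $\exists^{\mathsf{ram}}\bm x,\bm y\colon \psi(\bm x,\bm y,\bm z)$ holds for a valuation $\bm c$ of $\bm z$ iff there is an infinite sequence $(\bm a_i)_{i\ge1}$ of pairwise distinct real vectors with $\psi(\bm a_i,\bm a_j,\bm c)$ for all $i<j$. *)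

theory Defs
  imports Complex_Main
begin

text \<open>Linear terms over variables of type 'v, built from variables, rational
constants, addition and multiplication by rational scalars (the usual
presentation of the signature <R;+,<,0,1> with rational constants).\<close>

datatype 'v lterm = Var 'v | Const rat | Add "'v lterm" "'v lterm" | Scale rat "'v lterm"

primrec teval :: "('v \<Rightarrow> real) \<Rightarrow> 'v lterm \<Rightarrow> real" where
  "teval e (Var v) = e v"
| "teval e (Const c) = of_rat c"
| "teval e (Add s t) = teval e s + teval e t"
| "teval e (Scale c t) = of_rat c * teval e t"

primrec tvars :: "'v lterm \<Rightarrow> 'v set" where
  "tvars (Var v) = {v}"
| "tvars (Const c) = {}"
| "tvars (Add s t) = tvars s \<union> tvars t"
| "tvars (Scale c t) = tvars t"

datatype 'v qf = Less "'v lterm" "'v lterm" | Equal "'v lterm" "'v lterm"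
  | Neg "'v qf" | Conj "'v qf" "'v qf" | Disj "'v qf" "'v qf"

primrec qeval :: "('v \<Rightarrow> real) \<Rightarrow> 'v qf \<Rightarrow> bool" where
  "qeval e (Less s t) = (teval e s < teval e t)"
| "qeval e (Equal s t) = (teval e s = teval e t)"
| "qeval e (Neg f) = (\<not> qeval e f)"
| "qeval e (Conj f g) = (qeval e f \<and> qeval e g)"
| "qeval e (Disj f g) = (qeval e f \<or> qeval e g)"

primrec qvars :: "'v qf \<Rightarrow> 'v set" where
  "qvars (Less s t) = tvars s \<union> tvars t"
| "qvars (Equal s t) = tvars s \<union> tvars t"
| "qvars (Neg f) = qvars f"
| "qvars (Conj f g) = qvars f \<union> qvars g"
| "qvars (Disj f g) = qvars f \<union> qvars g"

text \<open>An existential LRA formula with free variables of type 'v: a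
quantifier-free matrix over variables 'v + nat, where the variables Inr k are
existentially quantified (a prenex block of existential quantifiers).\<close>

type_synonym 'v exfm = "('v + nat) qf"

definition exeval :: "('v \<Rightarrow> real) \<Rightarrow> 'v exfm \<Rightarrow> bool" where
  "exeval e f = (\<exists>u :: nat \<Rightarrow> real. qeval (case_sum e u) f)"

definition free_vars :: "'v exfm \<Rightarrow> 'v set" where
  "free_vars f = {v. Inl v \<in> qvars f}"

datatype var4 = VX nat | VY nat | VW nat | VZ nat

text \<open>Tuples are real lists; out-of-range components default to 0 (irrelevant
under the well-formedness hypothesis of the theorem).\<close>

definition comp :: "real list \<Rightarrow> nat \<Rightarrow> real" where
  "comp xs i = (if i < length xs then xs ! i else 0)"

fun env4 :: "real list \<Rightarrow> real list \<Rightarrow> real list \<Rightarrow> real list \<Rightarrow> var4 \<Rightarrow> real" where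
  "env4 x y w z (VX i) = comp x i"
| "env4 x y w z (VY i) = comp y i"
| "env4 x y w z (VW i) = comp w i"
| "env4 x y w z (VZ i) = comp z i"

definition wf4 :: "nat \<Rightarrow> nat \<Rightarrow> nat \<Rightarrow> var4 exfm \<Rightarrow> bool" where
  "wf4 n m p f = (free_vars f \<subseteq>
     {VX i | i. i < n} \<union> {VY i | i. i < n} \<union> {VW i | i. i < m} \<union> {VZ i | i. i < p})"

definition ram_ex :: "nat \<Rightarrow> (real list \<Rightarrow> real list \<Rightarrow> bool) \<Rightarrow> bool" where
  "ram_ex d P = (\<exists>a :: nat \<Rightarrow> real list. (\<forall>i. length (a i) = d) \<and> inj a \<and>
                   (\<forall>i j. i < j \<longrightarrow> P (a i) (a j)))"

definition vadd :: "real list \<Rightarrow> real list \<Rightarrow> real list" where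
  "vadd u v = map2 (+) u v"

end

theory Submission
  imports Defs "HOL-Library.Ramsey"
begin

lemma ramsey_pairs:
  fixes col :: "nat \<Rightarrow> nat \<Rightarrow> 'c"
  assumes S: "infinite S" and C: "finite C"
    and col: "\<And>i j. i\<in>S \<Longrightarrow> j\<in>S \<Longrightarrow> i<j \<Longrightarrow> col i j \<in> C"
  obtains Y t where "Y \<subseteq> S" "infinite Y" "t\<in>C" "\<And>i j. i\<in>Y \<Longrightarrow> j\<in>Y \<Longrightarrow> i<j \<Longrightarrow> col i j = t"
proof -
  obtain h where h: "bij_betw h {0..<card C} C" using ex_bij_betw_nat_finite[OF C] by blast
  define idx where "idx = the_inv_into {0..<card C} h"
  have idx_lt: "idx c < card C" if "c \<in> C" for c
  proof -
    have "idx c \<in> {0..<card C}" unfolding idx_def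
      using h that by (intro the_inv_into_into) (auto simp: bij_betw_def)
    then show ?thesis by simp
  qed
  have hidx: "h (idx c) = c" if "c \<in> C" for c
    unfolding idx_def using f_the_inv_into_f_bij_betw[OF h] that by blast
  define f where "f X = idx (col (Min X) (Max X))" for X :: "nat set"
  have part: "\<forall>x\<in>S. \<forall>y\<in>S. x \<noteq> y \<longrightarrow> f {x, y} < card C"
  proof (intro ballI impI)
    fix x y assume "x \<in> S" "y \<in> S" "x \<noteq> y"
    then show "f {x,y} < card C" unfolding f_def
      by (cases "x < y") (auto intro!: idx_lt col simp: min_def max_def)
  qed
  obtain Y t0 where Y: "Y \<subseteq> S" "infinite Y" "t0 < card C"
    "\<forall>x\<in>Y. \<forall>y\<in>Y. x\<noteq>y \<longrightarrow> f {x, y} = t0"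
    using Ramsey2[OF S part] by blast
  show ?thesis
  proof (rule that[OF Y(1,2), of "h t0"])
    show "h t0 \<in> C" using h Y(3) by (auto simp: bij_betw_def)
    fix i j assume "i \<in> Y" "j \<in> Y" "i < j"
    then have "f {i,j} = t0" using Y(4) by auto
    then have "idx (col i j) = t0" unfolding f_def using \<open>i<j\<close> by (simp add: min_def max_def)
    moreover have "col i j \<in> C" using col \<open>i\<in>Y\<close> \<open>j\<in>Y\<close> \<open>i<j\<close> Y(1) by auto
    ultimately show "col i j = h t0" using hidx by metis
  qed
qed

datatype con = Con (cA: "nat \<Rightarrow> real") (cB: "nat \<Rightarrow> real") (cg: "nat \<Rightarrow> real") (cs: bool)

definition cval :: "nat \<Rightarrow> con \<Rightarrow> nat \<Rightarrow> nat \<Rightarrow> (nat \<Rightarrow> real) \<Rightarrow> real" where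
  "cval m c i j W = cA c i + cB c j + (\<Sum>l<m. cg c l * W l)"

definition csat :: "nat \<Rightarrow> con \<Rightarrow> nat \<Rightarrow> nat \<Rightarrow> (nat \<Rightarrow> real) \<Rightarrow> bool" where
  "csat m c i j W = (if cs c then cval m c i j W < 0 else cval m c i j W \<le> 0)"

definition sc :: "nat \<Rightarrow> con \<Rightarrow> con" where
  "sc m c = Con (\<lambda>i. - cA c i / cg c m) (\<lambda>j. - cB c j / cg c m) (\<lambda>l. - cg c l / cg c m) (cs c)"

definition cdiff :: "con \<Rightarrow> con \<Rightarrow> bool \<Rightarrow> con" where
  "cdiff c d s = Con (\<lambda>i. cA c i - cA d i) (\<lambda>j. cB c j - cB d j) (\<lambda>l. cg c l - cg d l) s"

lemma cval_sc: "cval m (sc m c) i j W = - cval m c i j W / cg c m"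
  unfolding cval_def sc_def
  by (simp add: sum_divide_distrib sum_negf add_divide_distrib diff_divide_distrib)

lemma cval_cdiff: "cval m (cdiff c d s) i j W = cval m c i j W - cval m d i j W"
  unfolding cval_def cdiff_def by (simp add: sum_subtractf algebra_simps)

lemma cs_cdiff[simp]: "cs (cdiff c d s) = s" by (simp add: cdiff_def)

lemma cval_Suc: "cval (Suc m) c i j W = cval m c i j W + cg c m * W m"
  unfolding cval_def by simp

lemma cval_cong: "(\<And>l. l < m \<Longrightarrow> W l = W' l) \<Longrightarrow> cval m c i j W = cval m c i j W'"
  unfolding cval_def by (auto intro!: sum.cong)

lemma cval_split: "cval m d i j (\<lambda>l. v l + u l) =
   (cA d i + (\<Sum>l<m. cg d l * v l)) + (cB d j + (\<Sum>l<m. cg d l * u l))"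
  unfolding cval_def by (simp add: distrib_left sum.distrib)

lemma up_iff:
  fixes a R t :: real assumes a: "a > 0"
  shows "(R + a*t < 0) = (t < -R/a)" "(R + a*t \<le> 0) = (t \<le> -R/a)"
proof -
  have 1: "t < (-R)/a \<longleftrightarrow> t*a < -R" by (rule pos_less_divide_eq[OF a])
  have 2: "t \<le> (-R)/a \<longleftrightarrow> t*a \<le> -R" by (rule pos_le_divide_eq[OF a])
  show "(R + a*t < 0) = (t < -R/a)" using 1 by (simp add: mult.commute) linarith
  show "(R + a*t \<le> 0) = (t \<le> -R/a)" using 2 by (simp add: mult.commute) linarith
qed
lemma low_iff:
  fixes a R t :: real assumes a: "a < 0"
  shows "(R + a*t < 0) = (-R/a < t)" "(R + a*t \<le> 0) = (-R/a \<le> t)"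
proof -
  have 1: "(-R)/a < t \<longleftrightarrow> t*a < -R" by (rule neg_divide_less_eq[OF a])
  have 2: "(-R)/a \<le> t \<longleftrightarrow> t*a \<le> -R" by (rule neg_divide_le_eq[OF a])
  show "(R + a*t < 0) = (-R/a < t)" using 1 by (simp add: mult.commute) linarith
  show "(R + a*t \<le> 0) = (-R/a \<le> t)" using 2 by (simp add: mult.commute) linarith
qed

lemma best_exists:
  fixes f :: "'a \<Rightarrow> real"
  assumes "finite X" "X \<noteq> {}"
  shows "\<exists>x\<in>X. \<forall>y\<in>X. f y < f x \<or> (f y = f x \<and> (p y \<longrightarrow> p x))"
proof -
  define M where "M = Max (f ` X)"
  have M: "\<forall>y\<in>X. f y \<le> M" "\<exists>x\<in>X. f x = M"
  proof -
    show "\<forall>y\<in>X. f y \<le> M" using assms unfolding M_def by auto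
    have "M \<in> f ` X" unfolding M_def using assms by (intro Max_in) auto
    then show "\<exists>x\<in>X. f x = M" by auto
  qed
  show ?thesis
  proof (cases "\<exists>x\<in>X. f x = M \<and> p x")
    case True
    then obtain x where "x\<in>X" "f x = M" "p x" by blast
    then show ?thesis using M(1) by (metis order_le_less)
  next
    case False
    obtain x where "x\<in>X" "f x = M" using M(2) by blast
    then show ?thesis using M(1) False by (metis order_le_less)
  qed
qed


lemma csat_low: "cg c m < 0 \<Longrightarrow> csat (Suc m) c i j W =
   (if cs c then cval m (sc m c) i j W < W m else cval m (sc m c) i j W \<le> W m)"
  by (simp add: csat_def cval_Suc cval_sc low_iff)

lemma csat_up: "cg c m > 0 \<Longrightarrow> csat (Suc m) c i j W =
   (if cs c then W m < cval m (sc m c) i j W else W m \<le> cval m (sc m c) i j W)"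
  by (simp add: csat_def cval_Suc cval_sc up_iff)

lemma csat_zero: "cg c m = 0 \<Longrightarrow> csat (Suc m) c i j W = csat m c i j W"
  by (simp add: csat_def cval_Suc)

lemma csat_diff: "csat m (cdiff c d s) i j W =
   (if s then cval m c i j W < cval m d i j W else cval m c i j W \<le> cval m d i j W)"
  by (simp add: csat_def cval_cdiff)

lemma csat_cong: "(\<And>l. l < m \<Longrightarrow> W l = W' l) \<Longrightarrow> csat m c i j W = csat m c i j W'"
  unfolding csat_def using cval_cong[of m W W' c i j] by simp

definition newK :: "nat \<Rightarrow> con list \<Rightarrow> con option \<Rightarrow> con option \<Rightarrow> con list" where
  "newK m K ko lo = filter (\<lambda>c. cg c m = 0) K
   @ (case ko of None \<Rightarrow> [] | Some k \<Rightarrow> map (\<lambda>c. cdiff (sc m c) (sc m k) (cs c \<and> \<not> cs k)) (filter (\<lambda>c. cg c m < 0) K))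
   @ (case lo of None \<Rightarrow> [] | Some l \<Rightarrow> map (\<lambda>c. cdiff (sc m l) (sc m c) (cs c \<and> \<not> cs l)) (filter (\<lambda>c. cg c m > 0) K))
   @ (case (ko, lo) of (Some k, Some l) \<Rightarrow> [cdiff (sc m k) (sc m l) (cs k \<or> cs l)] | _ \<Rightarrow> [])"

lemma elim:
  "infinite S \<Longrightarrow> (\<And>i j. i\<in>S \<Longrightarrow> j\<in>S \<Longrightarrow> i<j \<Longrightarrow> \<exists>W. \<forall>c\<in>set K. csat m c i j W) \<Longrightarrow>
   \<exists>S'\<subseteq>S. infinite S' \<and> (\<exists>v u. \<forall>i\<in>S'. \<forall>j\<in>S'. i<j \<longrightarrow> (\<forall>c\<in>set K. csat m c i j (\<lambda>l. v i l + u j l)))"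
proof (induction m arbitrary: K S)
  case 0
  show ?case
  proof (intro exI conjI)
    show "S \<subseteq> S" "infinite S" by (auto simp: 0)
    show "\<forall>i\<in>S. \<forall>j\<in>S. i<j \<longrightarrow> (\<forall>c\<in>set K. csat 0 c i j (\<lambda>l. (\<lambda>_ _. 0) i l + (\<lambda>_ _. 0) j l))"
    proof (intro ballI impI)
      fix i j c assume "i\<in>S" "j\<in>S" "i<j" "c \<in> set K"
      then obtain W where "\<forall>c\<in>set K. csat 0 c i j W" using 0 by blast
      then have "csat 0 c i j W" using \<open>c \<in> set K\<close> by blast
      moreover have "csat 0 c i j W = csat 0 c i j (\<lambda>l. (\<lambda>_ _. 0::real) i l + (\<lambda>_ _. 0) j l)"
        by (rule csat_cong) simp
      ultimately show "csat 0 c i j (\<lambda>l. (\<lambda>_ _. 0::real) i l + (\<lambda>_ _. 0) j l)" by simp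
    qed
  qed
next
  case (Suc m)
  define Wit where "Wit i j = (SOME W. \<forall>c\<in>set K. csat (Suc m) c i j W)" for i j
  have wit: "\<forall>c\<in>set K. csat (Suc m) c i j (Wit i j)" if "i\<in>S" "j\<in>S" "i<j" for i j
    unfolding Wit_def using Suc.prems(2)[OF that] by (rule someI_ex)
  define lows where "lows = filter (\<lambda>c. cg c m < 0) K"
  define ups where "ups = filter (\<lambda>c. cg c m > 0) K"
  define bnd where "bnd c i j W = cval m (sc m c) i j W" for c i j W
  define Pk where "Pk i j k \<longleftrightarrow> k \<in> set lows \<and>
     (\<forall>c\<in>set lows. bnd c i j (Wit i j) < bnd k i j (Wit i j) \<or>
        (bnd c i j (Wit i j) = bnd k i j (Wit i j) \<and> (cs c \<longrightarrow> cs k)))" for i j k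
  define Pl where "Pl i j k \<longleftrightarrow> k \<in> set ups \<and>
     (\<forall>c\<in>set ups. (- bnd c i j (Wit i j)) < (- bnd k i j (Wit i j)) \<or>
        ((- bnd c i j (Wit i j)) = (- bnd k i j (Wit i j)) \<and> (cs c \<longrightarrow> cs k)))" for i j k
  define ks where "ks i j = (if lows = [] then None else Some (SOME k. Pk i j k))" for i j
  define ls where "ls i j = (if ups = [] then None else Some (SOME k. Pl i j k))" for i j
  have ks_prop: "case ks i j of None \<Rightarrow> lows = [] | Some k \<Rightarrow> Pk i j k" for i j
  proof (cases "lows = []")
    case True then show ?thesis by (simp add: ks_def)
  next
    case False
    have "\<exists>k. Pk i j k" unfolding Pk_def
      using best_exists[of "set lows" "\<lambda>c. bnd c i j (Wit i j)" cs] False by auto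
    then have "Pk i j (SOME k. Pk i j k)" by (rule someI_ex)
    then show ?thesis using False unfolding ks_def by simp
  qed
  have ls_prop: "case ls i j of None \<Rightarrow> ups = [] | Some k \<Rightarrow> Pl i j k" for i j
  proof (cases "ups = []")
    case True then show ?thesis by (simp add: ls_def)
  next
    case False
    have "\<exists>k. Pl i j k" unfolding Pl_def
      using best_exists[of "set ups" "\<lambda>c. - bnd c i j (Wit i j)" cs] False by auto
    then have "Pl i j (SOME k. Pl i j k)" by (rule someI_ex)
    then show ?thesis using False unfolding ls_def by simp
  qed
  define CC where "CC = insert None (Some ` set K)"
  have ks_in: "ks i j \<in> CC" for i j
  proof (cases "ks i j")
    case None then show ?thesis by (simp add: CC_def)
  next
    case (Some k)
    with ks_prop[of i j] have "Pk i j k" by simp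
    then have "k \<in> set K" by (simp add: Pk_def lows_def)
    then show ?thesis using Some by (simp add: CC_def)
  qed
  have ls_in: "ls i j \<in> CC" for i j
  proof (cases "ls i j")
    case None then show ?thesis by (simp add: CC_def)
  next
    case (Some k)
    with ls_prop[of i j] have "Pl i j k" by simp
    then have "k \<in> set K" by (simp add: Pl_def ups_def)
    then show ?thesis using Some by (simp add: CC_def)
  qed
  have col_in: "\<And>i j. i\<in>S \<Longrightarrow> j\<in>S \<Longrightarrow> i<j \<Longrightarrow> (ks i j, ls i j) \<in> CC \<times> CC"
    using ks_in ls_in by blast
  have fin: "finite (CC \<times> CC)" unfolding CC_def by simp
  have "\<exists>Y t. Y \<subseteq> S \<and> infinite Y \<and> t \<in> CC \<times> CC \<and> (\<forall>i\<in>Y. \<forall>j\<in>Y. i<j \<longrightarrow> (ks i j, ls i j) = t)"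
    apply (rule ramsey_pairs[of S "CC \<times> CC" "\<lambda>i j. (ks i j, ls i j)"])
       apply (rule Suc.prems(1))
      apply (rule fin)
     apply (rule col_in; assumption)
    apply blast
    done
  then obtain Y t where Y: "Y \<subseteq> S" "infinite Y" "t \<in> CC \<times> CC"
    and hom0: "\<forall>i\<in>Y. \<forall>j\<in>Y. i<j \<longrightarrow> (ks i j, ls i j) = t" by blast
  have hom: "\<And>i j. i\<in>Y \<Longrightarrow> j\<in>Y \<Longrightarrow> i<j \<Longrightarrow> (ks i j, ls i j) = t" using hom0 by blast
  obtain ko lo where t: "t = (ko, lo)" by (cases t)
  define K' where "K' = newK m K ko lo"
  have "Y \<noteq> {}" using Y(2) by (metis finite.emptyI)
  then obtain i0 where i0: "i0 \<in> Y" by blast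
  have "infinite (Y - {..i0})" using Y(2) by auto
  then have "Y - {..i0} \<noteq> {}" by (metis finite.emptyI)
  then obtain j0 where "j0 \<in> Y - {..i0}" by blast
  then have j0: "j0 \<in> Y" "i0 < j0" by auto
  have kslo: "ks i0 j0 = ko" "ls i0 j0 = lo" using hom[OF i0 j0(1,2)] t by auto
  have ko_fact: "case ko of None \<Rightarrow> lows = [] | Some k \<Rightarrow> k \<in> set lows"
    using ks_prop[of i0 j0] kslo unfolding Pk_def by (cases ko) auto
  have lo_fact: "case lo of None \<Rightarrow> ups = [] | Some k \<Rightarrow> k \<in> set ups"
    using ls_prop[of i0 j0] kslo unfolding Pl_def by (cases lo) auto
  have K'wit: "\<forall>c\<in>set K'. csat m c i j (Wit i j)" if ij: "i\<in>Y" "j\<in>Y" "i<j" for i j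
  proof
    fix c assume c: "c \<in> set K'"
    define W where "W = Wit i j"
    have w: "\<forall>c\<in>set K. csat (Suc m) c i j W" unfolding W_def using wit ij Y(1) by auto
    have kij: "ks i j = ko" "ls i j = lo" using hom[OF ij] t by auto
    have kp: "case ko of None \<Rightarrow> lows = [] | Some k \<Rightarrow> k \<in> set lows \<and>
     (\<forall>c\<in>set lows. bnd c i j W < bnd k i j W \<or> (bnd c i j W = bnd k i j W \<and> (cs c \<longrightarrow> cs k)))"
      using ks_prop[of i j] kij unfolding W_def Pk_def by simp
    have lp: "case lo of None \<Rightarrow> ups = [] | Some k \<Rightarrow> k \<in> set ups \<and>
     (\<forall>c\<in>set ups. (- bnd c i j W) < (- bnd k i j W) \<or> ((- bnd c i j W) = (- bnd k i j W) \<and> (cs c \<longrightarrow> cs k)))"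
      using ls_prop[of i j] kij unfolding W_def Pl_def by simp
    have "(c \<in> set K \<and> cg c m = 0) \<or> (\<exists>k. ko = Some k \<and> (\<exists>c0\<in>set lows. c = cdiff (sc m c0) (sc m k) (cs c0 \<and> \<not> cs k)))
      \<or> (\<exists>l. lo = Some l \<and> (\<exists>c0\<in>set ups. c = cdiff (sc m l) (sc m c0) (cs c0 \<and> \<not> cs l)))
      \<or> (\<exists>k l. ko = Some k \<and> lo = Some l \<and> c = cdiff (sc m k) (sc m l) (cs k \<or> cs l))"
      using c unfolding K'_def newK_def lows_def ups_def by (auto split: option.splits)
    then have "csat m c i j W"
    proof (elim disjE exE conjE bexE)
      assume "c \<in> set K" "cg c m = 0"
      then show ?thesis using w csat_zero[of c m i j W] by blast
    next
      fix k c0 assume "ko = Some k" "c0 \<in> set lows" "c = cdiff (sc m c0) (sc m k) (cs c0 \<and> \<not> cs k)"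
      then show ?thesis using kp by (auto simp: csat_diff bnd_def)
    next
      fix l c0 assume "lo = Some l" "c0 \<in> set ups" "c = cdiff (sc m l) (sc m c0) (cs c0 \<and> \<not> cs l)"
      then show ?thesis using lp by (auto simp: csat_diff bnd_def)
    next
      fix k l assume k: "ko = Some k" and l: "lo = Some l" and c: "c = cdiff (sc m k) (sc m l) (cs k \<or> cs l)"
      have kl: "k \<in> set lows" "l \<in> set ups" using kp lp k l by auto
      then have "k \<in> set K" "cg k m < 0" "l \<in> set K" "cg l m > 0" unfolding lows_def ups_def by auto
      then have "csat (Suc m) k i j W" "csat (Suc m) l i j W" using w by auto
      then have a: "if cs k then cval m (sc m k) i j W < W m else cval m (sc m k) i j W \<le> W m"
        and b: "if cs l then W m < cval m (sc m l) i j W else W m \<le> cval m (sc m l) i j W"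
        using csat_low[OF \<open>cg k m < 0\<close>] csat_up[OF \<open>cg l m > 0\<close>] by auto
      show ?thesis unfolding c csat_diff using a b by (auto split: if_splits)
    qed
    then show "csat m c i j (Wit i j)" unfolding W_def .
  qed
  have K'ex: "\<exists>W. \<forall>c\<in>set K'. csat m c i j W" if "i\<in>Y" "j\<in>Y" "i<j" for i j
    using K'wit[OF that] by blast
  obtain S' v' u' where S': "S' \<subseteq> Y" "infinite S'"
    and vu': "\<forall>i\<in>S'. \<forall>j\<in>S'. i<j \<longrightarrow> (\<forall>c\<in>set K'. csat m c i j (\<lambda>l. v' i l + u' j l))"
    using Suc.IH[OF Y(2) K'ex] by blast
  define hP where "hP d i = cA d i + (\<Sum>l<m. cg d l * v' i l)" for d i
  define hQ where "hQ d j = cB d j + (\<Sum>l<m. cg d l * u' j l)" for d j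
  define T1 where "T1 i = (case (ko, lo) of (Some k, Some l) \<Rightarrow> (hP (sc m k) i + hP (sc m l) i)/2
     | (Some k, None) \<Rightarrow> hP (sc m k) i + 1 | (None, Some l) \<Rightarrow> hP (sc m l) i - 1 | (None, None) \<Rightarrow> 0)" for i
  define T2 where "T2 j = (case (ko, lo) of (Some k, Some l) \<Rightarrow> (hQ (sc m k) j + hQ (sc m l) j)/2
     | (Some k, None) \<Rightarrow> hQ (sc m k) j | (None, Some l) \<Rightarrow> hQ (sc m l) j | (None, None) \<Rightarrow> 0)" for j
  define v where "v i = (v' i)(m := T1 i)" for i
  define u where "u j = (u' j)(m := T2 j)" for j
  have bsplit: "bnd d i j (\<lambda>l. v' i l + u' j l) = hP (sc m d) i + hQ (sc m d) j" for d i j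
    unfolding bnd_def hP_def hQ_def by (rule cval_split)
  have Wm: "v i m + u j m = (case (ko, lo) of (Some k, Some l) \<Rightarrow> (bnd k i j (\<lambda>l. v' i l + u' j l) + bnd l i j (\<lambda>l. v' i l + u' j l))/2
     | (Some k, None) \<Rightarrow> bnd k i j (\<lambda>l. v' i l + u' j l) + 1 | (None, Some l) \<Rightarrow> bnd l i j (\<lambda>l. v' i l + u' j l) - 1 | (None, None) \<Rightarrow> 0)" for i j
    unfolding v_def u_def T1_def T2_def bsplit by (cases ko; cases lo) (simp_all add: field_simps)
  have Wl: "v i l + u j l = v' i l + u' j l" if "l < m" for i j l using that unfolding v_def u_def by auto
  have cv: "cval m d i j (\<lambda>l. v i l + u j l) = cval m d i j (\<lambda>l. v' i l + u' j l)" for d i j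
    by (rule cval_cong) (simp add: Wl)
  have cs': "csat m d i j (\<lambda>l. v i l + u j l) = csat m d i j (\<lambda>l. v' i l + u' j l)" for d i j
    by (rule csat_cong) (simp add: Wl)
  show ?case
  proof (intro exI conjI)
    show "S' \<subseteq> S" using S'(1) Y(1) by auto
    show "infinite S'" by (rule S'(2))
    show "\<forall>i\<in>S'. \<forall>j\<in>S'. i<j \<longrightarrow> (\<forall>c\<in>set K. csat (Suc m) c i j (\<lambda>l. v i l + u j l))"
    proof (intro ballI impI)
      fix i j c assume ij: "i\<in>S'" "j\<in>S'" "i<j" and c: "c \<in> set K"
      define W' where "W' = (\<lambda>l. v' i l + u' j l)"
      define W where "W = (\<lambda>l. v i l + u j l)"
      have dK: "csat m d i j W'" if "d \<in> set K'" for d using vu' ij that unfolding W'_def by blast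
      have bc: "cval m (sc m d) i j W = bnd d i j W'" for d unfolding bnd_def W_def W'_def by (rule cv)
      have WM: "W m = (case (ko, lo) of (Some k, Some l) \<Rightarrow> (bnd k i j W' + bnd l i j W')/2
         | (Some k, None) \<Rightarrow> bnd k i j W' + 1 | (None, Some l) \<Rightarrow> bnd l i j W' - 1 | (None, None) \<Rightarrow> 0)"
        unfolding W_def W'_def by (rule Wm)
      consider (z) "cg c m = 0" | (n) "cg c m < 0" | (p) "cg c m > 0" by linarith
      then have "csat (Suc m) c i j W"
      proof cases
        case z
        have "c \<in> set K'" unfolding K'_def newK_def using c z by simp
        then have "csat m c i j W'" by (rule dK)
        then have "csat m c i j W" unfolding W_def W'_def using cs' by simp
        then show ?thesis using csat_zero[OF z] by simp
      next
        case n
        have cl: "c \<in> set lows" unfolding lows_def using c n by simp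
        then obtain k where k: "ko = Some k" "k \<in> set lows" using ko_fact by (cases ko) auto
        have "cdiff (sc m c) (sc m k) (cs c \<and> \<not> cs k) \<in> set K'"
          unfolding K'_def newK_def using cl k(1) unfolding lows_def by auto
        from dK[OF this] have h1: "if cs c \<and> \<not> cs k then bnd c i j W' < bnd k i j W' else bnd c i j W' \<le> bnd k i j W'"
          by (simp add: csat_diff bnd_def)
        have goal: "csat (Suc m) c i j W = (if cs c then bnd c i j W' < W m else bnd c i j W' \<le> W m)"
          using csat_low[OF n] bc by simp
        show ?thesis
        proof (cases lo)
          case None
          then have "W m = bnd k i j W' + 1" using WM k by simp
          then show ?thesis unfolding goal using h1 by (auto split: if_splits)
        next
          case (Some l)
          then have lu: "l \<in> set ups" using lo_fact by simp
          have "cdiff (sc m k) (sc m l) (cs k \<or> cs l) \<in> set K'"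
            unfolding K'_def newK_def using k(1) Some by simp
          from dK[OF this] have h2: "if cs k \<or> cs l then bnd k i j W' < bnd l i j W' else bnd k i j W' \<le> bnd l i j W'"
            by (simp add: csat_diff bnd_def)
          have "W m = (bnd k i j W' + bnd l i j W')/2" using WM k Some by simp
          then show ?thesis unfolding goal using h1 h2 by (auto split: if_splits)
        qed
      next
        case p
        have cl: "c \<in> set ups" unfolding ups_def using c p by simp
        then obtain l where l: "lo = Some l" "l \<in> set ups" using lo_fact by (cases lo) auto
        have "cdiff (sc m l) (sc m c) (cs c \<and> \<not> cs l) \<in> set K'"
          unfolding K'_def newK_def using cl l(1) unfolding ups_def by auto
        from dK[OF this] have h1: "if cs c \<and> \<not> cs l then bnd l i j W' < bnd c i j W' else bnd l i j W' \<le> bnd c i j W'"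
          by (simp add: csat_diff bnd_def)
        have goal: "csat (Suc m) c i j W = (if cs c then W m < bnd c i j W' else W m \<le> bnd c i j W')"
          using csat_up[OF p] bc by simp
        show ?thesis
        proof (cases ko)
          case None
          then have "W m = bnd l i j W' - 1" using WM l by simp
          then show ?thesis unfolding goal using h1 by (auto split: if_splits)
        next
          case (Some k)
          have "cdiff (sc m k) (sc m l) (cs k \<or> cs l) \<in> set K'"
            unfolding K'_def newK_def using l(1) Some by simp
          from dK[OF this] have h2: "if cs k \<or> cs l then bnd k i j W' < bnd l i j W' else bnd k i j W' \<le> bnd l i j W'"
            by (simp add: csat_diff bnd_def)
          have "W m = (bnd k i j W' + bnd l i j W')/2" using WM l Some by simp
          then show ?thesis unfolding goal using h1 h2 by (auto split: if_splits)
        qed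
      qed
      then show "csat (Suc m) c i j (\<lambda>l. v i l + u j l)" unfolding W_def .
    qed
  qed
qed


primrec atoms :: "'v qf \<Rightarrow> ('v lterm \<times> 'v lterm) list" where
  "atoms (Less s t) = [(s,t)]"
| "atoms (Equal s t) = [(s,t)]"
| "atoms (Neg f) = atoms f"
| "atoms (Conj f g) = atoms f @ atoms g"
| "atoms (Disj f g) = atoms f @ atoms g"

definition dsgn :: "('v \<Rightarrow> real) \<Rightarrow> ('v lterm \<times> 'v lterm) \<Rightarrow> real" where
  "dsgn e a = sgn (teval e (fst a) - teval e (snd a))"

lemma qeval_sgn: "(\<forall>a\<in>set (atoms f). dsgn e a = dsgn e' a) \<Longrightarrow> qeval e f = qeval e' f"
proof (induction f)
  case (Less s t)
  then have "sgn (teval e s - teval e t) = sgn (teval e' s - teval e' t)" by (simp add: dsgn_def)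
  then show ?case by (simp add: sgn_if split: if_splits)
next
  case (Equal s t)
  then have "sgn (teval e s - teval e t) = sgn (teval e' s - teval e' t)" by (simp add: dsgn_def)
  then show ?case by (simp add: sgn_if split: if_splits)
qed auto

lemma finite_tvars: "finite (tvars t)" by (induction t) auto
lemma finite_qvars: "finite (qvars f)" by (induction f) (auto simp: finite_tvars)

lemma atoms_vars: "a \<in> set (atoms f) \<Longrightarrow> tvars (fst a) \<union> tvars (snd a) \<subseteq> qvars f"
  by (induction f) auto

definition eX :: "real list \<Rightarrow> real list \<Rightarrow> var4 + nat \<Rightarrow> real" where
  "eX z x = case_sum (\<lambda>v. case v of VX l \<Rightarrow> comp x l | VZ l \<Rightarrow> comp z l | _ \<Rightarrow> 0) (\<lambda>_. 0)"
definition eY :: "real list \<Rightarrow> var4 + nat \<Rightarrow> real" where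
  "eY y = case_sum (\<lambda>v. case v of VY l \<Rightarrow> comp y l | _ \<Rightarrow> 0) (\<lambda>_. 0)"
definition eW :: "nat \<Rightarrow> (nat \<Rightarrow> real) \<Rightarrow> var4 + nat \<Rightarrow> real" where
  "eW m W = case_sum (\<lambda>v. case v of VW l \<Rightarrow> (if l < m then W l else 0) | _ \<Rightarrow> 0) (\<lambda>k. W (m+k))"

lemma env_dec:
  assumes "length w = m" "\<forall>l<m. w!l = W l" "\<forall>k. U k = W (m+k)"
  shows "case_sum (env4 x y w z) U = (\<lambda>v. eX z x v + eY y v + eW m W v)"
proof
  fix v show "case_sum (env4 x y w z) U v = eX z x v + eY y v + eW m W v"
  proof (cases v)
    case (Inl a) then show ?thesis using assms
      by (cases a) (auto simp: eX_def eY_def eW_def comp_def)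
  next
    case (Inr k) then show ?thesis using assms by (simp add: eX_def eY_def eW_def)
  qed
qed

lemma teval_add3: "teval (\<lambda>v. e1 v + e2 v + e3 v) t = teval e1 t + teval e2 t + teval e3 t - 2 * teval (\<lambda>_. 0) t"
proof (induction t)
  case (Scale c t)
  then show ?case by (simp add: right_diff_distrib distrib_left)
qed (auto simp: algebra_simps)

lemma sum_delta_mult: "a < (M::nat) \<Longrightarrow> (\<Sum>k<M. (if a = k then 1 else 0) * W k) = (W a::real)"
proof -
  assume "a < M"
  have "(\<Sum>k<M. (if a = k then 1 else 0) * W k) = (\<Sum>k<M. if a = k then W k else 0)"
    by (rule sum.cong) auto
  also have "\<dots> = W a" using \<open>a < M\<close> by (subst sum.delta') simp_all
  finally show ?thesis .
qed

lemma linrep: "(\<forall>k. Inr k \<in> tvars t \<longrightarrow> k < N) \<Longrightarrow>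
  \<exists>\<gamma>. \<forall>W. teval (eW m W) t - teval (\<lambda>_. 0) t = (\<Sum>l<m+N. \<gamma> l * W l)"
proof (induction t)
  case (Var v)
  show ?case
  proof (cases v)
    case (Inl a)
    show ?thesis
    proof (cases "\<exists>l. a = VW l \<and> l < m")
      case True
      then obtain l where l: "a = VW l" "l < m" by blast
      have lM: "l < m + N" using l by simp
      show ?thesis
        by (rule exI[of _ "\<lambda>k. if l = k then 1 else 0"]) (simp add: Inl l eW_def sum_delta_mult[OF lM])
    next
      case False
      then have "eW m W v = 0" for W using Inl by (cases a) (auto simp: eW_def)
      then show ?thesis by (intro exI[of _ "\<lambda>_. 0"]) simp
    qed
  next
    case (Inr k)
    then have k: "k < N" using Var by simp
    have kM: "m + k < m + N" using k by simp
    show ?thesis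
      by (rule exI[of _ "\<lambda>l. if m + k = l then 1 else 0"]) (simp add: Inr eW_def sum_delta_mult[OF kM])
  qed
next
  case (Const c)
  then show ?case by (intro exI[of _ "\<lambda>_. 0"]) simp
next
  case (Add s t)
  then obtain g1 g2 where g1: "\<forall>W. teval (eW m W) s - teval (\<lambda>_. 0) s = (\<Sum>l<m+N. g1 l * W l)"
    and g2: "\<forall>W. teval (eW m W) t - teval (\<lambda>_. 0) t = (\<Sum>l<m+N. g2 l * W l)" by auto
  show ?case
  proof (intro exI[of _ "\<lambda>l. g1 l + g2 l"] allI)
    fix W show "teval (eW m W) (Add s t) - teval (\<lambda>_. 0) (Add s t) = (\<Sum>l<m + N. (g1 l + g2 l) * W l)"
      using g1 g2 by (simp add: distrib_right sum.distrib algebra_simps)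
  qed
next
  case (Scale c t)
  then obtain g where g: "\<forall>W. teval (eW m W) t - teval (\<lambda>_. 0) t = (\<Sum>l<m+N. g l * W l)" by auto
  show ?case
  proof (intro exI[of _ "\<lambda>l. of_rat c * g l"] allI)
    fix W have "teval (eW m W) (Scale c t) - teval (\<lambda>_. 0) (Scale c t) = of_rat c * (teval (eW m W) t - teval (\<lambda>_. 0) t)"
      by (simp add: algebra_simps)
    also have "\<dots> = (\<Sum>l<m + N. (of_rat c * g l) * W l)" using g by (simp add: sum_distrib_left mult.assoc)
    finally show "teval (eW m W) (Scale c t) - teval (\<lambda>_. 0) (Scale c t) = (\<Sum>l<m + N. (of_rat c * g l) * W l)" .
  qed
qed

definition conlist :: "(nat \<Rightarrow> real) \<Rightarrow> (nat \<Rightarrow> real) \<Rightarrow> (nat \<Rightarrow> real) \<Rightarrow> real \<Rightarrow> con list" where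
  "conlist A B g \<sigma> = (if \<sigma> < 0 then [Con A B g True]
     else if \<sigma> = 0 then [Con A B g False, Con (\<lambda>i. - A i) (\<lambda>j. - B j) (\<lambda>l. - g l) False]
     else [Con (\<lambda>i. - A i) (\<lambda>j. - B j) (\<lambda>l. - g l) True])"

lemma cval_neg: "cval M (Con (\<lambda>i. - A i) (\<lambda>j. - B j) (\<lambda>l. - g l) s) i j W = - cval M (Con A B g s') i j W"
  unfolding cval_def by (simp add: sum_negf)

lemma conlist_iff:
  assumes "\<sigma> \<in> {-1,0,1}"
  shows "(\<forall>c\<in>set (conlist A B g \<sigma>). csat M c i j W) \<longleftrightarrow> sgn (cval M (Con A B g False) i j W) = \<sigma>"
proof -
  have e: "cval M (Con A B g True) i j W = cval M (Con A B g False) i j W" by (simp add: cval_def)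
  show ?thesis using assms
    by (auto simp: conlist_def csat_def cval_neg[of M A B g _ i j W False] e sgn_if)
qed


lemma Kiff:
  "length as = length ps \<Longrightarrow> set ps \<subseteq> {-1,0,1} \<Longrightarrow>
   (\<forall>c\<in>set (concat (map2 (\<lambda>a \<sigma>. conlist (fA a) (fB a) (fG a) \<sigma>) as ps)). csat M c i j W) \<longleftrightarrow>
   map (\<lambda>a. sgn (cval M (Con (fA a) (fB a) (fG a) False) i j W)) as = ps"
proof (induction as ps rule: list_induct2)
  case Nil then show ?case by simp
next
  case (Cons a as p ps)
  have p: "p \<in> {-1,0,1}" using Cons.prems by simp
  have "(\<forall>c\<in>set (concat (map2 (\<lambda>a \<sigma>. conlist (fA a) (fB a) (fG a) \<sigma>) (a#as) (p#ps))). csat M c i j W) \<longleftrightarrow>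
     (\<forall>c\<in>set (conlist (fA a) (fB a) (fG a) p). csat M c i j W) \<and>
     (\<forall>c\<in>set (concat (map2 (\<lambda>a \<sigma>. conlist (fA a) (fB a) (fG a) \<sigma>) as ps)). csat M c i j W)" by auto
  also have "\<dots> \<longleftrightarrow> sgn (cval M (Con (fA a) (fB a) (fG a) False) i j W) = p \<and>
     map (\<lambda>a. sgn (cval M (Con (fA a) (fB a) (fG a) False) i j W)) as = ps"
    using conlist_iff[OF p] Cons.IH Cons.prems by simp
  finally show ?case by simp
qed

lemma map2_map_same: "map2 f (map g xs) (map h xs) = map (\<lambda>x. f (g x) (h x)) xs"
  by (induction xs) auto

lemma sgn_in: "sgn (r::real) \<in> {-1,0,1}" by (simp add: sgn_if)


theorem mainTheorem5:
  fixes n m p :: nat and \<phi> :: "var4 exfm" and z :: "real list"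
  assumes "wf4 n m p \<phi>" and "length z = p"
  shows "ram_ex n (\<lambda>x y. \<exists>w. length w = m \<and> exeval (env4 x y w z) \<phi>)
     \<longleftrightarrow> ram_ex (n + 2 * m) (\<lambda>a b.
            exeval (env4 (take n a) (take n b)
                         (vadd (take m (drop n a)) (drop (n + m) b)) z) \<phi>
            \<and> take n a \<noteq> take n b)"
proof
  assume "ram_ex n (\<lambda>x y. \<exists>w. length w = m \<and> exeval (env4 x y w z) \<phi>)"
  then have "\<exists>x::nat \<Rightarrow> real list. (\<forall>i. length (x i) = n) \<and> inj x \<and>
    (\<forall>i j. i<j \<longrightarrow> (\<exists>w. length w = m \<and> exeval (env4 (x i) (x j) w z) \<phi>))"
    unfolding ram_ex_def .
  then obtain x :: "nat \<Rightarrow> real list" where xx: "(\<forall>i. length (x i) = n) \<and> inj x \<and>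
    (\<forall>i j. i<j \<longrightarrow> (\<exists>w. length w = m \<and> exeval (env4 (x i) (x j) w z) \<phi>))" ..
  have xl: "\<forall>i. length (x i) = n" and xinj: "inj x"
    and hx: "\<forall>i j. i<j \<longrightarrow> (\<exists>w. length w = m \<and> exeval (env4 (x i) (x j) w z) \<phi>)"
    using xx by auto
  have "finite (Inr -` qvars \<phi> :: nat set)"
    by (rule finite_vimageI[OF finite_qvars]) simp
  then obtain N where N0: "\<forall>k\<in>(Inr -` qvars \<phi> :: nat set). k < N"
    unfolding finite_nat_set_iff_bounded by blast
  have N: "\<forall>k. Inr k \<in> qvars \<phi> \<longrightarrow> k < N" using N0 by simp
  define M where "M = m + N"
  define ENV where "ENV i j W = (\<lambda>v. eX z (x i) v + eY (x j) v + eW m W v)" for i j W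
  have exW: "\<exists>W. qeval (ENV i j W) \<phi>" if ij: "i<j" for i j
  proof -
    obtain w where w0: "length w = m" "exeval (env4 (x i) (x j) w z) \<phi>"
      using hx[rule_format, OF ij] by (elim exE conjE) (rule that)
    from w0(2) obtain U where U: "qeval (case_sum (env4 (x i) (x j) w z) U) \<phi>"
      unfolding exeval_def by (elim exE)
    have w: "length w = m" "qeval (case_sum (env4 (x i) (x j) w z) U) \<phi>" using w0(1) U by auto
    define W where "W l = (if l < m then w ! l else U (l - m))" for l
    have "case_sum (env4 (x i) (x j) w z) U = ENV i j W" unfolding ENV_def
    proof (rule env_dec)
      show "length w = m" by (rule w(1))
      show "\<forall>l<m. w ! l = W l" by (simp add: W_def)
      show "\<forall>k. U k = W (m + k)" by (simp add: W_def)
    qed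
    then have "qeval (ENV i j W) \<phi>" using w(2) by simp
    then show ?thesis by blast
  qed
  define Wt where "Wt i j = (SOME W. qeval (ENV i j W) \<phi>)" for i j
  have Wt: "qeval (ENV i j (Wt i j)) \<phi>" if "i<j" for i j
    unfolding Wt_def using exW[OF that] by (rule someI_ex)
  define AL where "AL = atoms \<phi>"
  define gam where "gam t = (SOME \<gamma>. \<forall>W. teval (eW m W) t - teval (\<lambda>_. 0) t = (\<Sum>l<M. \<gamma> l * W l))" for t
  have gam: "teval (eW m W) t - teval (\<lambda>_. 0) t = (\<Sum>l<M. gam t l * W l)"
    if "t = fst a \<or> t = snd a" "a \<in> set AL" for t a W
  proof -
    have "\<forall>k. Inr k \<in> tvars t \<longrightarrow> k < N" using atoms_vars[of a \<phi>] that N unfolding AL_def by auto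
    from linrep[OF this, of m] have "\<exists>\<gamma>. \<forall>W. teval (eW m W) t - teval (\<lambda>_. 0) t = (\<Sum>l<M. \<gamma> l * W l)"
      unfolding M_def .
    then have "\<forall>W. teval (eW m W) t - teval (\<lambda>_. 0) t = (\<Sum>l<M. gam t l * W l)"
      unfolding gam_def by (rule someI_ex)
    then show ?thesis by blast
  qed
  define fA where "fA a i = teval (eX z (x i)) (fst a) - teval (eX z (x i)) (snd a)
       - (teval (\<lambda>_. 0) (fst a) - teval (\<lambda>_. 0) (snd a))" for a i
  define fB where "fB a j = teval (eY (x j)) (fst a) - teval (eY (x j)) (snd a)" for a j
  define fG where "fG a l = gam (fst a) l - gam (snd a) l" for a l
  have dlem: "dsgn (ENV i j W) a = sgn (cval M (Con (fA a) (fB a) (fG a) False) i j W)"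
    if "a \<in> set AL" for a i j W
  proof -
    have g1: "teval (eW m W) (fst a) = teval (\<lambda>_. 0) (fst a) + (\<Sum>l<M. gam (fst a) l * W l)"
      using gam[of "fst a" a W] that by simp
    have g2: "teval (eW m W) (snd a) = teval (\<lambda>_. 0) (snd a) + (\<Sum>l<M. gam (snd a) l * W l)"
      using gam[of "snd a" a W] that by simp
    have "teval (ENV i j W) (fst a) - teval (ENV i j W) (snd a) = cval M (Con (fA a) (fB a) (fG a) False) i j W"
      unfolding ENV_def teval_add3 g1 g2 cval_def fA_def fB_def fG_def
      by (simp add: left_diff_distrib sum_subtractf)
    then show ?thesis unfolding dsgn_def by simp
  qed
  define KK where "KK P = concat (map2 (\<lambda>a \<sigma>. conlist (fA a) (fB a) (fG a) \<sigma>) AL P)" for P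
  have KKiff: "(\<forall>c\<in>set (KK P). csat M c i j W) \<longleftrightarrow> map (dsgn (ENV i j W)) AL = P"
    if "length AL = length P" "set P \<subseteq> {-1,0,1}" for P i j W
  proof -
    have e1: "map (dsgn (ENV i j W)) AL = map (\<lambda>a. sgn (cval M (Con (fA a) (fB a) (fG a) False) i j W)) AL"
      using dlem by simp
    have k: "(\<forall>c\<in>set (KK P). csat M c i j W) \<longleftrightarrow>
      map (\<lambda>a. sgn (cval M (Con (fA a) (fB a) (fG a) False) i j W)) AL = P"
      unfolding KK_def by (rule Kiff[OF that])
    show ?thesis unfolding e1 by (rule k)
  qed
  define CS where "CS = {ps. set ps \<subseteq> {-1,0,1::real} \<and> length ps = length AL}"
  have finCS: "finite CS" unfolding CS_def by (rule finite_lists_length_eq) simp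
  define col where "col i j = map (dsgn (ENV i j (Wt i j))) AL" for i j
  have col_in: "\<And>i j. i\<in>UNIV \<Longrightarrow> j\<in>UNIV \<Longrightarrow> i<j \<Longrightarrow> col i j \<in> CS"
    unfolding CS_def col_def dsgn_def using sgn_in by auto
  have "\<exists>Y P. Y \<subseteq> UNIV \<and> infinite Y \<and> P \<in> CS \<and> (\<forall>i\<in>Y. \<forall>j\<in>Y. i<j \<longrightarrow> col i j = P)"
    apply (rule ramsey_pairs[of UNIV CS col])
       apply simp
      apply (rule finCS)
     apply (rule col_in; assumption)
    apply blast
    done
  then obtain Y P where Y: "infinite Y" "P \<in> CS" and hom: "\<forall>i\<in>Y. \<forall>j\<in>Y. i<j \<longrightarrow> col i j = P"
    by blast
  have P: "length AL = length P" "set P \<subseteq> {-1,0,1}" using Y(2) unfolding CS_def by auto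
  have Kex: "\<exists>W. \<forall>c\<in>set (KK P). csat M c i j W" if "i\<in>Y" "j\<in>Y" "i<j" for i j
  proof -
    have "map (dsgn (ENV i j (Wt i j))) AL = P" using hom that unfolding col_def by blast
    then have "\<forall>c\<in>set (KK P). csat M c i j (Wt i j)" using KKiff[OF P] by simp
    then show ?thesis by blast
  qed
  obtain S' where S': "S' \<subseteq> Y" "infinite S'" and
    vu: "\<exists>v u. \<forall>i\<in>S'. \<forall>j\<in>S'. i<j \<longrightarrow> (\<forall>c\<in>set (KK P). csat M c i j (\<lambda>l. v i l + u j l))"
    using elim[OF Y(1) Kex] by blast
  then obtain v u where vu: "\<forall>i\<in>S'. \<forall>j\<in>S'. i<j \<longrightarrow> (\<forall>c\<in>set (KK P). csat M c i j (\<lambda>l. v i l + u j l))"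
    by blast
  have good: "qeval (ENV i j (\<lambda>l. v i l + u j l)) \<phi>" if ij: "i\<in>S'" "j\<in>S'" "i<j" for i j
  proof -
    have "\<forall>c\<in>set (KK P). csat M c i j (\<lambda>l. v i l + u j l)" using vu ij by blast
    then have "map (dsgn (ENV i j (\<lambda>l. v i l + u j l))) AL = P" using KKiff[OF P] by simp
    moreover have "map (dsgn (ENV i j (Wt i j))) AL = P" using hom ij S'(1) unfolding col_def by blast
    ultimately have "map (dsgn (ENV i j (\<lambda>l. v i l + u j l))) AL = map (dsgn (ENV i j (Wt i j))) AL" by simp
    then have "\<forall>a\<in>set (atoms \<phi>). dsgn (ENV i j (\<lambda>l. v i l + u j l)) a = dsgn (ENV i j (Wt i j)) a"
      unfolding AL_def map_eq_conv .
    then have "qeval (ENV i j (\<lambda>l. v i l + u j l)) \<phi> = qeval (ENV i j (Wt i j)) \<phi>" by (rule qeval_sgn)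
    then show ?thesis using Wt[OF ij(3)] by simp
  qed
  define r where "r = enumerate S'"
  have rS: "r k \<in> S'" for k unfolding r_def using S'(2) by (rule enumerate_in_set)
  have rmono: "r k1 < r k2" if "k1 < k2" for k1 k2 unfolding r_def using enumerate_mono[OF that S'(2)] .
  define b where "b k = x (r k) @ map (v (r k)) [0..<m] @ map (u (r k)) [0..<m]" for k
  have bl: "length (b k) = n + 2 * m" for k unfolding b_def using xl by simp
  have btake: "take n (b k) = x (r k)" for k unfolding b_def using xl by simp
  have bmid: "take m (drop n (b k)) = map (v (r k)) [0..<m]" for k unfolding b_def using xl by simp
  have bend: "drop (n + m) (b k) = map (u (r k)) [0..<m]" for k unfolding b_def using xl by simp
  have xr_ne: "x (r k1) \<noteq> x (r k2)" if "k1 \<noteq> k2" for k1 k2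
  proof -
    have "r k1 \<noteq> r k2"
    proof (cases "k1 < k2")
      case True then show ?thesis using rmono[OF True] by simp
    next
      case False then have "k2 < k1" using that by simp
      then show ?thesis using rmono[of k2 k1] by simp
    qed
    then show ?thesis using xinj by (auto simp: inj_def)
  qed
  show "ram_ex (n + 2 * m) (\<lambda>a b.
            exeval (env4 (take n a) (take n b)
                         (vadd (take m (drop n a)) (drop (n + m) b)) z) \<phi>
            \<and> take n a \<noteq> take n b)"
    unfolding ram_ex_def
  proof (intro exI conjI allI impI)
    show "length (b i) = n + 2 * m" for i by (rule bl)
    show "inj b"
    proof (rule injI)
      fix k1 k2 assume "b k1 = b k2"
      then have "x (r k1) = x (r k2)" using btake by metis
      then show "k1 = k2" using xr_ne by blast
    qed
    fix k1 k2 :: nat assume k: "k1 < k2"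
    show "take n (b k1) \<noteq> take n (b k2)" using xr_ne k btake by simp
    define i where "i = r k1"
    define j where "j = r k2"
    have ij: "i \<in> S'" "j \<in> S'" "i < j" unfolding i_def j_def using rS rmono k by auto
    define w' where "w' = map (\<lambda>l. v i l + u j l) [0..<m]"
    have vw: "vadd (take m (drop n (b k1))) (drop (n + m) (b k2)) = w'"
      unfolding vadd_def bmid bend w'_def i_def j_def by (simp add: map2_map_same)
    have "case_sum (env4 (x i) (x j) w' z) (\<lambda>k. v i (m+k) + u j (m+k)) = ENV i j (\<lambda>l. v i l + u j l)"
      unfolding ENV_def by (rule env_dec) (simp_all add: w'_def)
    then have "qeval (case_sum (env4 (x i) (x j) w' z) (\<lambda>k. v i (m+k) + u j (m+k))) \<phi>"
      using good[OF ij] by simp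
    then have "exeval (env4 (x i) (x j) w' z) \<phi>" unfolding exeval_def by blast
    then show "exeval (env4 (take n (b k1)) (take n (b k2)) (vadd (take m (drop n (b k1))) (drop (n + m) (b k2))) z) \<phi>"
      unfolding vw btake i_def j_def .
  qed
next
  assume "ram_ex (n + 2 * m) (\<lambda>a b.
            exeval (env4 (take n a) (take n b)
                         (vadd (take m (drop n a)) (drop (n + m) b)) z) \<phi>
            \<and> take n a \<noteq> take n b)"
  then have "\<exists>b::nat \<Rightarrow> real list. (\<forall>i. length (b i) = n + 2 * m) \<and> inj b \<and> (\<forall>i j. i < j \<longrightarrow>
       exeval (env4 (take n (b i)) (take n (b j)) (vadd (take m (drop n (b i))) (drop (n + m) (b j))) z) \<phi>
       \<and> take n (b i) \<noteq> take n (b j))"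
    unfolding ram_ex_def .
  then obtain b :: "nat \<Rightarrow> real list" where bb: "(\<forall>i. length (b i) = n + 2 * m) \<and> inj b \<and> (\<forall>i j. i < j \<longrightarrow>
       exeval (env4 (take n (b i)) (take n (b j)) (vadd (take m (drop n (b i))) (drop (n + m) (b j))) z) \<phi>
       \<and> take n (b i) \<noteq> take n (b j))" ..
  have bl: "\<forall>i. length (b i) = n + 2 * m" using bb by (rule conjunct1)
  have hb: "\<forall>i j. i < j \<longrightarrow>
       exeval (env4 (take n (b i)) (take n (b j)) (vadd (take m (drop n (b i))) (drop (n + m) (b j))) z) \<phi>
       \<and> take n (b i) \<noteq> take n (b j)" using bb by (elim conjE)
  show "ram_ex n (\<lambda>x y. \<exists>w. length w = m \<and> exeval (env4 x y w z) \<phi>)"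
    unfolding ram_ex_def
  proof (intro exI[of _ "\<lambda>k. take n (b k)"] conjI allI impI)
    show "length (take n (b i)) = n" for i using bl by simp
    show "inj (\<lambda>k. take n (b k))"
    proof (rule injI)
      fix k1 k2 assume e: "take n (b k1) = take n (b k2)"
      show "k1 = k2"
      proof (rule ccontr)
        assume "k1 \<noteq> k2"
        then consider "k1 < k2" | "k2 < k1" by linarith
        then show False
        proof cases
          case 1
          then have "take n (b k1) \<noteq> take n (b k2)" using hb by blast
          then show False using e by simp
        next
          case 2
          then have "take n (b k2) \<noteq> take n (b k1)" using hb by blast
          then show False using e by simp
        qed
      qed
    qed
    fix i j :: nat assume "i < j"
    show "\<exists>w. length w = m \<and> exeval (env4 (take n (b i)) (take n (b j)) w z) \<phi>"
    proof (intro exI conjI)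
      show "exeval (env4 (take n (b i)) (take n (b j)) (vadd (take m (drop n (b i))) (drop (n + m) (b j))) z) \<phi>"
        using hb \<open>i<j\<close> by blast
      have "length (b i) = n + 2 * m" "length (b j) = n + 2 * m" using bl by auto
      then show "length (vadd (take m (drop n (b i))) (drop (n + m) (b j))) = m"
        by (simp add: vadd_def)
    qed
  qed
qed

end
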